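(* Let $\alpha:\mathbb{Z}\curvearrowright X$ be a minimal continuous action on a compact Hausdorff space $X$, let $K$ be a topological group and $K_0\subset K$ a closed subgroup. Let $c:\mathbb{Z}\times X\to K_0$ be a continuous cocycle such that $c(n,x)=f(\alpha_n(x))f(x)^{-1}$ for all $n\in\mathbb{Z}$, $x\in X$, for some continuous map $f:X\to K$. Then there is a continuous map $f':X\to K_0$ such that $c(n,x)=f'(\alpha_n(x))f'(x)^{-1}$ for all $n\in\mathbb{Z}$ and $x\in X$.
   Context: A continuous map $c:G\times X\to K$ for an action $G\curvearrowright X$ is a cocycle if $c(g_1g_2,x)=c(g_1,g_2x)c(g_2,x)$ for all $g_1,g_2\in G$, $x\in X$. *)

theory Defs
  imports "HOL-Analysis.Analysis"
begin

definition int_action :: "(int \<Rightarrow> 'x \<Rightarrow> 'x) \<Rightarrow> bool" where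
  "int_action \<alpha> \<longleftrightarrow> \<alpha> 0 = id \<and> (\<forall>m n. \<alpha> (m + n) = \<alpha> m \<circ> \<alpha> n)"

text \<open>Continuity of the action (Z is discrete, so this means every alpha n is continuous).\<close>
definition continuous_int_action :: "(int \<Rightarrow> 'x::topological_space \<Rightarrow> 'x) \<Rightarrow> bool" where
  "continuous_int_action \<alpha> \<longleftrightarrow> int_action \<alpha> \<and> (\<forall>n. continuous_on UNIV (\<alpha> n))"

definition minimal_int_action :: "(int \<Rightarrow> 'x::topological_space \<Rightarrow> 'x) \<Rightarrow> bool" where
  "minimal_int_action \<alpha> \<longleftrightarrow>
     (\<forall>A. closed A \<and> (\<forall>n. \<alpha> n ` A \<subseteq> A) \<longrightarrow> A = {} \<or> A = UNIV)"

text \<open>Subgroup of a (not necessarily commutative) group written additively.\<close>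
definition subgroup_add :: "'k::group_add set \<Rightarrow> bool" where
  "subgroup_add H \<longleftrightarrow> 0 \<in> H \<and> (\<forall>a\<in>H. \<forall>b\<in>H. a + b \<in> H) \<and> (\<forall>a\<in>H. - a \<in> H)"

text \<open>Cocycle identity c(g1 g2, x) = c(g1, g2 x) c(g2, x), group law of K written as +.\<close>
definition cocycle :: "(int \<Rightarrow> 'x \<Rightarrow> 'x) \<Rightarrow> (int \<Rightarrow> 'x \<Rightarrow> 'k::group_add) \<Rightarrow> bool" where
  "cocycle \<alpha> c \<longleftrightarrow> (\<forall>g1 g2 x. c (g1 + g2) x = c g1 (\<alpha> g2 x) + c g2 x)"

end

theory Submission
  imports Defs
begin

theorem lemma2p3:
  fixes \<alpha> :: "int \<Rightarrow> 'x::t2_space \<Rightarrow> 'x"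
    and K0 :: "'k::topological_group_add set"
    and c :: "int \<Rightarrow> 'x \<Rightarrow> 'k"
    and f :: "'x \<Rightarrow> 'k"
  assumes "compact (UNIV :: 'x set)"
    and "continuous_int_action \<alpha>"
    and "minimal_int_action \<alpha>"
    and "closed K0" and "subgroup_add K0"
    and "cocycle \<alpha> c"
    and "\<forall>n. continuous_on UNIV (c n)"
    and "\<forall>n x. c n x \<in> K0"
    and "continuous_on UNIV f"
    and "\<forall>n x. c n x = f (\<alpha> n x) + - f x"
  shows "\<exists>f'::'x \<Rightarrow> 'k. continuous_on UNIV f' \<and> (\<forall>x. f' x \<in> K0) \<and>
           (\<forall>n x. c n x = f' (\<alpha> n x) + - f' x)"
proof -
  fix x0 :: 'x
  define g where "g = (\<lambda>x. f x + - f x0)"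
  have gc: "continuous_on UNIV g" unfolding g_def
    by (intro continuous_intros assms(9))
  define A where "A = g -` K0"
  have cA: "closed A" unfolding A_def
    using continuous_closed_vimage[OF assms(4)] gc
    by (simp add: continuous_on_eq_continuous_within) blast
  have inv: "\<forall>n. \<alpha> n ` A \<subseteq> A"
  proof (intro allI subsetI)
    fix n y assume "y \<in> \<alpha> n ` A"
    then obtain x where x: "x \<in> A" "y = \<alpha> n x" by auto
    have e: "g (\<alpha> n x) = c n x + g x"
      unfolding g_def using assms(10) by (simp only: add.assoc minus_add_cancel)
    have "c n x + g x \<in> K0" using assms(5,8) x(1) unfolding subgroup_add_def A_def by auto
    then show "y \<in> A" using e x unfolding A_def by simp
  qed
  have "x0 \<in> A" using assms(5) unfolding A_def g_def subgroup_add_def by simp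
  then have "A = UNIV" using assms(3) cA inv unfolding minimal_int_action_def by blast
  then have gK: "\<forall>x. g x \<in> K0" unfolding A_def by auto
  have "\<forall>n x. c n x = g (\<alpha> n x) + - g x"
    unfolding g_def using assms(10) by (simp only: add.assoc minus_add minus_minus add_minus_cancel minus_add_cancel) simp
  then show ?thesis using gc gK by blast
qed

end
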